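(* Let $G$ be an $n$-dimensional Lie group with identity $e$ and Lie algebra $\mathfrak g = T_eG$, and let $\mathcal U=\mathbb R^m$, $\mathcal Y=\mathbb R^p$. Consider the system $\frac{d}{dt}x = f(x,u)$, $y=h(x,u)$ with $x\in G$, $u\in\mathcal U$, $y\in\mathcal Y$, where $f(\cdot,u)$ is a smooth vector field on $G$ and $h$ is smooth. Suppose $G$ acts smoothly on the left on $\mathcal U$ and on $\mathcal Y$ via maps $\psi_g:\mathcal U\to\mathcal U$ and $\rho_g:\mathcal Y\to\mathcal Y$, and that the system is left-invariant with equivariant output, i.e. for all $g,x\in G$, $u\in\mathcal U$: $f(gx,\psi_g(u)) = DL_g f(x,u)$ and $h(gx,\psi_g(u))=\rho_g(h(x,u))$, where $L_g:x\mapsto gx$. Fix a basis $W_1,\dots,W_n$ of $\mathfrak g$. Then any $G$-invariant pre-observer $\frac{d}{dt}\hat x = F(\hat x,u,y)$ of this system (i.e. $F(x,u,h(x,u))=f(x,u)$ for all $(x,u)$, and $F(g\hat x,\psi_g(u),\rho_g(y)) = DL_gF(\hat x,u,y)$ for all $g,\hat x,u,y$) is of the form $$\frac{d}{dt}\hat x = f(\hat x,u) + DL_{\hat x}\Big(\sum_{i=1}^n \mathcal L_i\big(\psi_{\hat x^{-1}}(u),\rho_{\hat x^{-1}}(y)\big)W_i\Big),$$ where $\mathcal L_1,\dots,\mathcal L_n$ are scalar functions of their arguments satisfying $\mathcal L_i\big(v, h(e,v)\big)=0$ for all $v\in\mathcal U$.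
   Context: $DL_g$ denotes the differential of left multiplication $L_g$, mapping $T_xG$ to $T_{gx}G$. A left group action $(\phi_g)_{g\in G}$ on a set $\Sigma$ is a smooth map $(g,\xi)\mapsto\phi_g(\xi)$ with $\phi_e=\mathrm{id}$ and $\phi_{g_2}\circ\phi_{g_1}=\phi_{g_2g_1}$. *)

theory Defs
  imports "HOL-Analysis.Analysis"
begin

fun Ck_on :: "nat \<Rightarrow> 'a::euclidean_space set \<Rightarrow> ('a \<Rightarrow> 'b::euclidean_space) \<Rightarrow> bool" where
  "Ck_on 0 U f = continuous_on U f"
| "Ck_on (Suc k) U f =
     (f differentiable_on U \<and> (\<forall>v. Ck_on k U (\<lambda>x. frechet_derivative f (at x) v)))"

definition smooth_on :: "'a::euclidean_space set \<Rightarrow> ('a \<Rightarrow> 'b::euclidean_space) \<Rightarrow> bool" where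
  "smooth_on U f \<longleftrightarrow> open U \<and> (\<forall>k. Ck_on k U f)"

definition smooth_map_on :: "'a::euclidean_space set \<Rightarrow> ('a \<Rightarrow> 'b::euclidean_space) \<Rightarrow> bool" where
  "smooth_map_on S f \<longleftrightarrow>
     (\<forall>x\<in>S. \<exists>U F. x \<in> U \<and> smooth_on U F \<and> (\<forall>y\<in>S \<inter> U. F y = f y))"

definition submanifold :: "'a::euclidean_space set \<Rightarrow> nat \<Rightarrow> bool" where
  "submanifold M n \<longleftrightarrow>
     (\<exists>B. B \<subseteq> (Basis :: 'a set) \<and> card B = n \<and>
       (\<forall>x\<in>M. \<exists>U V (\<phi>::'a \<Rightarrow> 'a) \<phi>'. x \<in> U \<and> smooth_on U \<phi> \<and> smooth_on V \<phi>' \<and>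
           \<phi> ` U = V \<and> (\<forall>y\<in>U. \<phi>' (\<phi> y) = y) \<and> (\<forall>z\<in>V. \<phi> (\<phi>' z) = z) \<and>
           \<phi> ` (M \<inter> U) = V \<inter> span B))"

definition curve_through :: "'a::euclidean_space set \<Rightarrow> 'a \<Rightarrow> (real \<Rightarrow> 'a) \<Rightarrow> bool" where
  "curve_through M x \<gamma> \<longleftrightarrow> smooth_on UNIV \<gamma> \<and> (\<forall>t. \<gamma> t \<in> M) \<and> \<gamma> 0 = x"

definition tangent_space :: "'a::euclidean_space set \<Rightarrow> 'a \<Rightarrow> 'a set" where
  "tangent_space M x = {v. \<exists>\<gamma>. curve_through M x \<gamma> \<and> (\<gamma> has_vector_derivative v) (at 0)}"

definition differential :: "'a::euclidean_space set \<Rightarrow> ('a \<Rightarrow> 'b::euclidean_space) \<Rightarrow> 'a \<Rightarrow> 'a \<Rightarrow> 'b" where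
  "differential M f x v = (THE w. \<forall>\<gamma>. curve_through M x \<gamma> \<and> (\<gamma> has_vector_derivative v) (at 0)
       \<longrightarrow> ((f \<circ> \<gamma>) has_vector_derivative w) (at 0))"

definition lie_group ::
  "'a::euclidean_space set \<Rightarrow> nat \<Rightarrow> ('a \<Rightarrow> 'a \<Rightarrow> 'a) \<Rightarrow> ('a \<Rightarrow> 'a) \<Rightarrow> 'a \<Rightarrow> bool" where
  "lie_group G n mul iv e \<longleftrightarrow>
     submanifold G n \<and> e \<in> G \<and>
     (\<forall>x\<in>G. \<forall>y\<in>G. mul x y \<in> G) \<and> (\<forall>x\<in>G. iv x \<in> G) \<and>
     (\<forall>x\<in>G. \<forall>y\<in>G. \<forall>z\<in>G. mul (mul x y) z = mul x (mul y z)) \<and>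
     (\<forall>x\<in>G. mul e x = x \<and> mul x e = x) \<and>
     (\<forall>x\<in>G. mul (iv x) x = e \<and> mul x (iv x) = e) \<and>
     smooth_map_on (G \<times> G) (\<lambda>(x, y). mul x y) \<and> smooth_map_on G iv"

definition DL :: "'a::euclidean_space set \<Rightarrow> ('a \<Rightarrow> 'a \<Rightarrow> 'a) \<Rightarrow> 'a \<Rightarrow> 'a \<Rightarrow> 'a \<Rightarrow> 'a" where
  "DL G mul g x v = differential G (mul g) x v"

definition smooth_left_action ::
  "'a::euclidean_space set \<Rightarrow> ('a \<Rightarrow> 'a \<Rightarrow> 'a) \<Rightarrow> 'a \<Rightarrow> ('a \<Rightarrow> 'b::euclidean_space \<Rightarrow> 'b) \<Rightarrow> bool" where
  "smooth_left_action G mul e \<phi> \<longleftrightarrow>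
     smooth_map_on (G \<times> UNIV) (\<lambda>(g, \<xi>). \<phi> g \<xi>) \<and>
     (\<forall>\<xi>. \<phi> e \<xi> = \<xi>) \<and>
     (\<forall>g1\<in>G. \<forall>g2\<in>G. \<forall>\<xi>. \<phi> g2 (\<phi> g1 \<xi>) = \<phi> (mul g2 g1) \<xi>)"

end

theory Submission
  imports Defs
begin

lemma DL_linear:
  fixes G :: "'a::euclidean_space set" and mul :: "'a \<Rightarrow> 'a \<Rightarrow> 'a"
  assumes sm: "smooth_map_on (G \<times> G) (\<lambda>(x, y). mul x y)" and xG: "x \<in> G" and eG: "e \<in> G"
  shows "\<exists>D. linear D \<and> (\<forall>v\<in>tangent_space G e. DL G mul x e v = D v)"
proof -
  obtain U Fm where xU: "(x, e) \<in> U" and sU: "smooth_on U Fm"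
    and eqU: "\<forall>p\<in>(G \<times> G) \<inter> U. Fm p = (\<lambda>(x, y). mul x y) p"
    using sm xG eG unfolding smooth_map_on_def by blast
  have oU: "open U" using sU unfolding smooth_on_def by blast
  have "Ck_on (Suc 0) U Fm" using sU unfolding smooth_on_def by blast
  hence "Fm differentiable_on U" by simp
  hence "Fm differentiable at (x, e)" using oU xU differentiable_on_eq_differentiable_at by blast
  hence Fd: "(Fm has_derivative frechet_derivative Fm (at (x, e))) (at (x, e))"
    using frechet_derivative_works by blast
  define Fm' where "Fm' = frechet_derivative Fm (at (x, e))"
  have linF: "linear Fm'" using Fd unfolding Fm'_def by (rule has_derivative_linear)
  define D where "D = (\<lambda>v. Fm' (0, v))"
  have linD: "linear D" unfolding D_def using linF
    by (simp add: linear_iff linear_add[OF linF, symmetric] linear_cmul[OF linF, symmetric])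
  have key: "((mul x \<circ> \<gamma>) has_vector_derivative D v) (at 0)"
    if c: "curve_through G e \<gamma>" and d: "(\<gamma> has_vector_derivative v) (at 0)" for \<gamma> v
  proof -
    have "Ck_on (Suc 0) UNIV \<gamma>" using c unfolding curve_through_def smooth_on_def by blast
    hence "\<gamma> differentiable_on UNIV" by simp
    hence cont: "\<And>t. isCont \<gamma> t"
      by (simp add: differentiable_imp_continuous_within differentiable_on_eq_differentiable_at)
    have g0: "\<gamma> 0 = e" and gG: "\<And>t. \<gamma> t \<in> G" using c unfolding curve_through_def by auto
    have pd: "((\<lambda>t. (x, \<gamma> t)) has_derivative (\<lambda>h. (0, h *\<^sub>R v))) (at 0)"
      using d unfolding has_vector_derivative_def
      by (intro has_derivative_Pair has_derivative_const) auto
    have "(Fm \<circ> (\<lambda>t. (x, \<gamma> t)) has_derivative Fm' \<circ> (\<lambda>h. (0, h *\<^sub>R v))) (at 0)"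
      using diff_chain_at[OF pd] Fd g0 unfolding Fm'_def by simp
    moreover have "Fm' \<circ> (\<lambda>h. (0, h *\<^sub>R v)) = (\<lambda>h. h *\<^sub>R D v)"
      unfolding D_def using linear_cmul[OF linF, of h "(0, v)" for h] by (auto simp: fun_eq_iff)
    ultimately have "((\<lambda>t. Fm (x, \<gamma> t)) has_vector_derivative D v) (at 0)"
      unfolding has_vector_derivative_def by (simp add: o_def)
    moreover have "open ((\<lambda>t. (x, \<gamma> t)) -` U)"
      using oU cont by (intro continuous_open_vimage) auto
    moreover have "0 \<in> (\<lambda>t. (x, \<gamma> t)) -` U" using g0 xU by simp
    moreover have "Fm (x, \<gamma> t) = (mul x \<circ> \<gamma>) t" if "t \<in> (\<lambda>t. (x, \<gamma> t)) -` U" for t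
      using eqU that xG gG by auto
    ultimately show ?thesis by (rule has_vector_derivative_transform_within_open)
  qed
  have "DL G mul x e v = D v" if vT: "v \<in> tangent_space G e" for v
  proof -
    obtain \<gamma>0 where c0: "curve_through G e \<gamma>0" "(\<gamma>0 has_vector_derivative v) (at 0)"
      using vT unfolding tangent_space_def by blast
    show ?thesis unfolding DL_def differential_def
    proof (rule the_equality)
      show "\<forall>\<gamma>. curve_through G e \<gamma> \<and> (\<gamma> has_vector_derivative v) (at 0) \<longrightarrow>
          ((mul x \<circ> \<gamma>) has_vector_derivative D v) (at 0)" using key by blast
    next
      fix w assume "\<forall>\<gamma>. curve_through G e \<gamma> \<and> (\<gamma> has_vector_derivative v) (at 0) \<longrightarrow>
          ((mul x \<circ> \<gamma>) has_vector_derivative w) (at 0)"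
      hence "((mul x \<circ> \<gamma>0) has_vector_derivative w) (at 0)" using c0 by blast
      thus "w = D v" using key[OF c0] vector_derivative_unique_at by blast
    qed
  qed
  thus ?thesis using linD by blast
qed

theorem mainTheorem1:
  fixes G :: "'a::euclidean_space set" and n :: nat
    and mul :: "'a \<Rightarrow> 'a \<Rightarrow> 'a" and iv :: "'a \<Rightarrow> 'a" and e :: 'a
    and f :: "'a \<Rightarrow> real^'m \<Rightarrow> 'a"
    and h :: "'a \<Rightarrow> real^'m \<Rightarrow> real^'p"
    and \<psi> :: "'a \<Rightarrow> real^'m \<Rightarrow> real^'m"
    and \<rho> :: "'a \<Rightarrow> real^'p \<Rightarrow> real^'p"
    and W :: "nat \<Rightarrow> 'a"
    and F :: "'a \<Rightarrow> real^'m \<Rightarrow> real^'p \<Rightarrow> 'a"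
  assumes LG: "lie_group G n mul iv e"
    and f_tangent: "\<forall>x\<in>G. \<forall>u. f x u \<in> tangent_space G x"
    and f_smooth: "smooth_map_on (G \<times> UNIV) (\<lambda>(x, u). f x u)"
    and h_smooth: "smooth_map_on (G \<times> UNIV) (\<lambda>(x, u). h x u)"
    and \<psi>_action: "smooth_left_action G mul e \<psi>"
    and \<rho>_action: "smooth_left_action G mul e \<rho>"
    and f_inv: "\<forall>g\<in>G. \<forall>x\<in>G. \<forall>u. f (mul g x) (\<psi> g u) = DL G mul g x (f x u)"
    and h_equiv: "\<forall>g\<in>G. \<forall>x\<in>G. \<forall>u. h (mul g x) (\<psi> g u) = \<rho> g (h x u)"
    and W_in: "\<forall>i\<in>{1..n}. W i \<in> tangent_space G e"
    and W_inj: "inj_on W {1..n}"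
    and W_indep: "independent (W ` {1..n})"
    and W_span: "span (W ` {1..n}) = tangent_space G e"
    and F_tangent: "\<forall>x\<in>G. \<forall>u y. F x u y \<in> tangent_space G x"
    and F_smooth: "smooth_map_on (G \<times> UNIV) (\<lambda>(x, u, y). F x u y)"
    and F_pre: "\<forall>x\<in>G. \<forall>u. F x u (h x u) = f x u"
    and F_inv: "\<forall>g\<in>G. \<forall>x\<in>G. \<forall>u y.
                  F (mul g x) (\<psi> g u) (\<rho> g y) = DL G mul g x (F x u y)"
  shows "\<exists>L :: nat \<Rightarrow> real^'m \<Rightarrow> real^'p \<Rightarrow> real.
           (\<forall>i\<in>{1..n}. \<forall>v. L i v (h e v) = 0) \<and>
           (\<forall>x\<in>G. \<forall>u y. F x u y =
              f x u + DL G mul x e (\<Sum>i=1..n. L i (\<psi> (iv x) u) (\<rho> (iv x) y) *\<^sub>R W i))"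
  proof -
  have eG: "e \<in> G" and mulG: "\<forall>x\<in>G. \<forall>y\<in>G. mul x y \<in> G" and ivG: "\<forall>x\<in>G. iv x \<in> G"
    and unit: "\<forall>x\<in>G. mul e x = x \<and> mul x e = x"
    and inv: "\<forall>x\<in>G. mul (iv x) x = e \<and> mul x (iv x) = e"
    and msm: "smooth_map_on (G \<times> G) (\<lambda>(x, y). mul x y)"
    using LG unfolding lie_group_def by auto
  have \<psi>e: "\<forall>\<xi>. \<psi> e \<xi> = \<xi>" and \<psi>c: "\<forall>g1\<in>G. \<forall>g2\<in>G. \<forall>\<xi>. \<psi> g2 (\<psi> g1 \<xi>) = \<psi> (mul g2 g1) \<xi>"
    using \<psi>_action unfolding smooth_left_action_def by auto
  have \<rho>e: "\<forall>\<xi>. \<rho> e \<xi> = \<xi>" and \<rho>c: "\<forall>g1\<in>G. \<forall>g2\<in>G. \<forall>\<xi>. \<rho> g2 (\<rho> g1 \<xi>) = \<rho> (mul g2 g1) \<xi>"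
    using \<rho>_action unfolding smooth_left_action_def by auto
  define T where "T = tangent_space G e"
  define cf where "cf t = (SOME c. t = (\<Sum>i=1..n. c i *\<^sub>R W i))" for t
  have cf: "t = (\<Sum>i=1..n. cf t i *\<^sub>R W i)" if "t \<in> T" for t
  proof -
    have "t \<in> span (W ` {1..n})" using that W_span T_def by simp
    then obtain c where "t = (\<Sum>v\<in>W ` {1..n}. c v *\<^sub>R v)" using span_finite[of "W ` {1..n}"] by auto
    also have "\<dots> = (\<Sum>i=1..n. c (W i) *\<^sub>R W i)" using sum.reindex[OF W_inj] by simp
    finally have "\<exists>c. t = (\<Sum>i=1..n. c i *\<^sub>R W i)" by (rule exI[where x="c \<circ> W", simplified o_def])
    thus ?thesis unfolding cf_def by (rule someI_ex)
  qed
  define L where "L i v w = (if F e v w = f e v then 0 else cf (F e v w - f e v) i)" for i v w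
  have S: "(\<Sum>i=1..n. L i v w *\<^sub>R W i) = F e v w - f e v" for v w
  proof (cases "F e v w = f e v")
    case True thus ?thesis unfolding L_def by simp
  next
    case False
    have "F e v w - f e v \<in> T" unfolding T_def
      using F_tangent f_tangent eG W_span span_diff by metis
    thus ?thesis using cf False unfolding L_def by simp
  qed
  have "F x u y = f x u + DL G mul x e (\<Sum>i=1..n. L i (\<psi> (iv x) u) (\<rho> (iv x) y) *\<^sub>R W i)"
    if xG: "x \<in> G" for x u y
  proof -
    define v where "v = \<psi> (iv x) u"
    define w where "w = \<rho> (iv x) y"
    obtain D where linD: "linear D" and DD: "\<forall>t\<in>T. DL G mul x e t = D t"
      using DL_linear[OF msm xG eG] unfolding T_def by blast
    have u: "\<psi> x v = u" unfolding v_def using \<psi>c ivG xG inv \<psi>e by metis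
    have y: "\<rho> x w = y" unfolding w_def using \<rho>c ivG xG inv \<rho>e by metis
    have xe: "mul x e = x" using unit xG by blast
    have a: "F x u y = DL G mul x e (F e v w)" using F_inv xG eG u y xe by metis
    have b: "f x u = DL G mul x e (f e v)" using f_inv xG eG u xe by metis
    have aT: "F e v w \<in> T" and bT: "f e v \<in> T" and dT: "F e v w - f e v \<in> T"
      unfolding T_def using F_tangent f_tangent eG W_span span_diff by metis+
    show ?thesis unfolding v_def[symmetric] w_def[symmetric] S a b
      using DD aT bT dT linear_diff[OF linD] by simp
  qed
  moreover have "\<forall>i\<in>{1..n}. \<forall>v. L i v (h e v) = 0" using F_pre eG unfolding L_def by simp
  ultimately show ?thesis by blast
qed

end
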